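(* For $0<r<1$ and $c>0$, the topological space $\mathbb{Z}((T))_{r,\le c}$ is compact.
   Context: $\mathbb{Z}((T))_{r,\le c}$ is the set of integer Laurent series $\sum_{n\gg-\infty}a_nT^n$ ($a_n\in\mathbb{Z}$, $a_n=0$ for $n$ sufficiently negative) with $\sum|a_n|r^n\le c$, with the $T$-adic topology given by the norm $\|f\|=\delta^{v_T(f)}$ for fixed $\delta\in(0,1)$, $v_T(f)$ being the smallest index of a nonzero coefficient. *)

theory Defs
  imports "HOL-Analysis.Analysis" "HOL-Computational_Algebra.Formal_Laurent_Series"
begin

definition tadic_norm :: "real \<Rightarrow> int fls \<Rightarrow> real" where
  "tadic_norm \<delta> f = (if f = 0 then 0 else \<delta> powi (fls_subdegree f))"

definition tadic_dist :: "real \<Rightarrow> int fls \<Rightarrow> int fls \<Rightarrow> real" where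
  "tadic_dist \<delta> f g = tadic_norm \<delta> (f - g)"

definition tadic_topology :: "real \<Rightarrow> int fls topology" where
  "tadic_topology \<delta> = Metric_space.mtopology UNIV (tadic_dist \<delta>)"

definition Zr_le :: "real \<Rightarrow> real \<Rightarrow> int fls set" where
  "Zr_le r c = {f. (\<lambda>n::int. real_of_int \<bar>fls_nth f n\<bar> * r powi n) summable_on UNIV \<and>
                   (\<Sum>\<^sub>\<infinity>n::int. real_of_int \<bar>fls_nth f n\<bar> * r powi n) \<le> c}"

end

theory Submission
  imports Defs
begin

lemma tadic_dist_lt_iff:
  fixes \<delta> :: real and k :: int
  assumes "0 < \<delta>" "\<delta> < 1"
  shows "tadic_dist \<delta> f g < \<delta> powi k \<longleftrightarrow> (\<forall>n\<le>k. fls_nth f n = fls_nth g n)"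
proof (cases "f = g")
  case True
  then show ?thesis using assms by (simp add: tadic_dist_def tadic_norm_def)
next
  case False
  define h where "h = f - g"
  have h0: "h \<noteq> 0" using False by (simp add: h_def)
  define v where "v = fls_subdegree h"
  have d: "tadic_dist \<delta> f g = \<delta> powi v"
    using h0 by (simp add: tadic_dist_def tadic_norm_def h_def v_def)
  have "\<delta> powi v < \<delta> powi k \<longleftrightarrow> k < v"
    using assms power_int_strict_decreasing[of k v \<delta>] power_int_decreasing[of v k \<delta>]
    by (metis linorder_not_le not_less order_less_le)
  also have "\<dots> \<longleftrightarrow> (\<forall>n\<le>k. fls_nth f n = fls_nth g n)"
  proof
    assume "k < v"
    then show "\<forall>n\<le>k. fls_nth f n = fls_nth g n"
      using fls_eq0_below_subdegree[of _ h] by (auto simp: v_def h_def)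
  next
    assume A: "\<forall>n\<le>k. fls_nth f n = fls_nth g n"
    have "fls_nth h v \<noteq> 0" using h0 by (simp add: v_def)
    then show "k < v" using A unfolding h_def fls_minus_nth by (metis not_le eq_iff_diff_eq_0)
  qed
  finally show ?thesis using d by simp
qed

lemma tadic_metric:
  fixes \<delta> :: real
  assumes "0 < \<delta>" "\<delta> < 1"
  shows "Metric_space UNIV (tadic_dist \<delta>)"
proof
  fix x y :: "int fls"
  show "0 \<le> tadic_dist \<delta> x y" using assms by (simp add: tadic_dist_def tadic_norm_def)
  show "tadic_dist \<delta> x y = tadic_dist \<delta> y x"
    by (simp add: tadic_dist_def tadic_norm_def fls_subdegree_minus_sym)
  show "tadic_dist \<delta> x y = 0 \<longleftrightarrow> x = y"
    using assms by (simp add: tadic_dist_def tadic_norm_def)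
next
  fix f g h :: "int fls"
  show "tadic_dist \<delta> f h \<le> tadic_dist \<delta> f g + tadic_dist \<delta> g h"
  proof (cases "f = g \<or> g = h \<or> f = h")
    case True
    then show ?thesis using assms
      by (auto simp: tadic_dist_def tadic_norm_def fls_subdegree_minus_sym)
  next
    case False
    define v1 where "v1 = fls_subdegree (f - g)"
    define v2 where "v2 = fls_subdegree (g - h)"
    define w where "w = fls_subdegree (f - h)"
    have "min v1 v2 \<le> w" unfolding w_def
    proof (rule fls_subdegree_geI)
      show "f - h \<noteq> 0" using False by simp
      fix k assume "k < min v1 v2"
      then have "fls_nth (f - g) k = 0" "fls_nth (g - h) k = 0"
        using fls_eq0_below_subdegree[of k "f - g"] fls_eq0_below_subdegree[of k "g - h"]
        unfolding v1_def v2_def by (metis min_less_iff_conj)+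
      then show "fls_nth (f - h) k = 0" by simp
    qed
    then have "\<delta> powi w \<le> \<delta> powi (min v1 v2)"
      using assms by (intro power_int_decreasing) auto
    also have "\<dots> \<le> \<delta> powi v1 + \<delta> powi v2"
      using assms by (cases "v1 \<le> v2") (auto simp: min_def)
    finally show ?thesis using False
      by (simp add: tadic_dist_def tadic_norm_def v1_def v2_def w_def)
  qed
qed


lemma Zr_le_finite_sum:
  assumes "f \<in> Zr_le r c" "finite F" "0 < r"
  shows "(\<Sum>n\<in>F. real_of_int \<bar>fls_nth f n\<bar> * r powi n) \<le> c"
proof -
  let ?a = "\<lambda>n::int. real_of_int \<bar>fls_nth f n\<bar> * r powi n"
  have s: "?a summable_on UNIV" and le: "(\<Sum>\<^sub>\<infinity>n. ?a n) \<le> c"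
    using assms(1) by (auto simp: Zr_le_def)
  have "(\<Sum>n\<in>F. ?a n) = (\<Sum>\<^sub>\<infinity>n\<in>F. ?a n)" using assms(2) by simp
  also have "\<dots> \<le> (\<Sum>\<^sub>\<infinity>n. ?a n)"
    using assms(2,3) s by (intro infsum_mono_neutral) auto
  finally show ?thesis using le by simp
qed

lemma Zr_le_coeff:
  assumes "f \<in> Zr_le r c" "0 < r"
  shows "real_of_int \<bar>fls_nth f n\<bar> * r powi n \<le> c"
  using Zr_le_finite_sum[OF assms(1) _ assms(2), of "{n}"] by simp

lemma Zr_le_lower:
  assumes "0 < r" "r < 1"
  obtains N0 :: int where "\<And>f n. f \<in> Zr_le r c \<Longrightarrow> n < N0 \<Longrightarrow> fls_nth f n = 0"
proof -
  obtain m :: nat where m: "c < (1/r) ^ m" using real_arch_pow[of "1/r" c] assms by auto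
  have "fls_nth f n = 0" if f: "f \<in> Zr_le r c" and n: "n < - int m + 1" for f n
  proof (rule ccontr)
    assume nz: "fls_nth f n \<noteq> 0"
    have "(1/r) ^ m = r powi (- int m)" by (simp add: power_int_minus power_divide inverse_eq_divide)
    also have "\<dots> \<le> r powi n" using n assms by (intro power_int_decreasing) auto
    also have "\<dots> \<le> real_of_int \<bar>fls_nth f n\<bar> * r powi n"
    proof -
      have rpos: "0 < r powi n" using assms(1) by simp
      have "1 \<le> \<bar>fls_nth f n\<bar>" using nz by linarith
      then have "1 \<le> real_of_int \<bar>fls_nth f n\<bar>" by linarith
      then show ?thesis using rpos by (simp add: mult_le_cancel_right1)
    qed
    also have "\<dots> \<le> c" using Zr_le_coeff[OF f assms(1)] .
    finally show False using m by simp
  qed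
  then show ?thesis using that by blast
qed


theorem mainTheorem12:
  fixes r c \<delta> :: real
  assumes "0 < r" and "r < 1" and "0 < c" and "0 < \<delta>" and "\<delta> < 1"
  shows "compactin (tadic_topology \<delta>) (Zr_le r c)"
proof -
  define S where "S = Zr_le r c"
  define d where "d = tadic_dist \<delta>"
  interpret Metric_space UNIV d unfolding d_def using tadic_metric assms(4,5) .
  interpret Submetric UNIV d S by unfold_locales auto
  have lt: "\<And>f g k. d f g < \<delta> powi k \<longleftrightarrow> (\<forall>n\<le>k. fls_nth f n = fls_nth g n)"
    unfolding d_def using tadic_dist_lt_iff assms(4,5) by blast
  obtain N0 :: int where N0: "\<And>f n. f \<in> S \<Longrightarrow> n < N0 \<Longrightarrow> fls_nth f n = 0"
    using Zr_le_lower[OF assms(1,2)] unfolding S_def by blast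
  have small: "\<exists>k::int. \<delta> powi k < e" if e: "e > 0" for e :: real
  proof -
    obtain k :: nat where "\<delta> ^ k < e" using real_arch_pow_inv[OF e assms(5)] by blast
    then show ?thesis by (intro exI[of _ "int k"]) simp
  qed
  have tb: "mtotally_bounded S"
    unfolding mtotally_bounded_def
  proof (intro allI impI)
    fix e :: real assume "e > 0"
    then obtain k :: int where k: "\<delta> powi k < e" using small by blast
    define B where "B = \<lceil>c / r powi k\<rceil>"
    define cls where "cls f = restrict (fls_nth f) {N0..k}" for f :: "int fls"
    define rep where "rep \<phi> = (SOME f. f \<in> S \<and> cls f = \<phi>)" for \<phi>
    define K where "K = rep ` (cls ` S)"
    have bnd: "\<bar>fls_nth f n\<bar> \<le> B" if "f \<in> S" "n \<le> k" for f n
    proof -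
      have rp: "0 < r powi n" using assms(1) by simp
      have "real_of_int \<bar>fls_nth f n\<bar> * r powi n \<le> c"
        using Zr_le_coeff[OF _ assms(1)] that(1) unfolding S_def by blast
      then have "real_of_int \<bar>fls_nth f n\<bar> \<le> c / r powi n" using rp by (simp add: field_simps)
      also have "\<dots> \<le> c / r powi k"
        using assms(1,2,3) that(2) rp
        by (intro divide_left_mono power_int_decreasing) (auto intro: mult_pos_pos)
      also have "\<dots> \<le> real_of_int B" unfolding B_def by (rule le_of_int_ceiling)
      finally show ?thesis by linarith
    qed
    have bnd2: "fls_nth f n \<in> {-B..B}" if "f \<in> S" "n \<le> k" for f n
      using bnd[OF that] by auto
    have "cls ` S \<subseteq> PiE {N0..k} (\<lambda>_. {-B..B})"
      using bnd2 by (auto simp: cls_def)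
    then have fin: "finite (cls ` S)" by (rule finite_subset) (intro finite_PiE; simp)
    have repS: "rep (cls f) \<in> S \<and> cls (rep (cls f)) = cls f" if "f \<in> S" for f
      unfolding rep_def by (rule someI_ex) (use that in blast)
    show "\<exists>K. finite K \<and> K \<subseteq> S \<and> S \<subseteq> (\<Union>x\<in>K. mball x e)"
    proof (intro exI conjI)
      show "finite K" unfolding K_def using fin by simp
      show "K \<subseteq> S" unfolding K_def using repS by auto
      show "S \<subseteq> (\<Union>x\<in>K. mball x e)"
      proof
        fix f assume f: "f \<in> S"
        let ?g = "rep (cls f)"
        have "\<forall>n\<le>k. fls_nth ?g n = fls_nth f n"
        proof (intro allI impI)
          fix n assume "n \<le> k"
          show "fls_nth ?g n = fls_nth f n"
          proof (cases "n < N0")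
            case True then show ?thesis using N0 f repS[OF f] by metis
          next
            case False
            then have "n \<in> {N0..k}" using \<open>n \<le> k\<close> by simp
            then show ?thesis using repS[OF f] unfolding cls_def by (metis restrict_apply')
          qed
        qed
        then have "d ?g f < e" using lt k by (meson order_less_trans)
        then show "f \<in> (\<Union>x\<in>K. mball x e)" unfolding K_def using f by auto
      qed
    qed
  qed
  have comp: "sub.mcomplete"
    unfolding sub.mcomplete_def
  proof (intro allI impI)
    fix \<sigma> assume C: "sub.MCauchy \<sigma>"
    then have rS: "range \<sigma> \<subseteq> S" and C': "\<forall>e>0. \<exists>N. \<forall>n n'. N \<le> n \<longrightarrow> N \<le> n' \<longrightarrow> d (\<sigma> n) (\<sigma> n') < e"
      by (auto simp: sub.MCauchy_def)
    have "\<forall>k::int. \<exists>N. \<forall>m m'. N \<le> m \<longrightarrow> N \<le> m' \<longrightarrow> (\<forall>n\<le>k. fls_nth (\<sigma> m) n = fls_nth (\<sigma> m') n)"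
      using C' lt assms(4) by (metis zero_less_power_int) 
    then obtain N where N: "\<And>k m m' n. N k \<le> m \<Longrightarrow> N k \<le> m' \<Longrightarrow> n \<le> k \<Longrightarrow> fls_nth (\<sigma> m) n = fls_nth (\<sigma> m') n"
      by metis
    define g where "g n = fls_nth (\<sigma> (N n)) n" for n
    have agree: "fls_nth (\<sigma> m) n = g n" if "N k \<le> m" "n \<le> k" for k m n
    proof -
      define M where "M = max m (N n)"
      have "fls_nth (\<sigma> m) n = fls_nth (\<sigma> M) n" using N[of k m M n] that by (simp add: M_def)
      also have "\<dots> = g n" unfolding g_def using N[of n M "N n" n] by (simp add: M_def)
      finally show ?thesis .
    qed
    have g0: "g n = 0" if "n < N0" for n using N0[of "\<sigma> (N n)" n] rS that unfolding g_def by auto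
    define l where "l = Abs_fls g"
    have lg: "fls_nth l n = g n" for n
      unfolding l_def by (rule nth_Abs_fls_lower_bound[of N0]) (use g0 in auto)
    let ?a = "\<lambda>n::int. real_of_int \<bar>g n\<bar> * r powi n"
    have fs: "sum ?a F \<le> c" if "finite F" for F
    proof (cases "F = {}")
      case True then show ?thesis using assms(3) by simp
    next
      case False
      define k where "k = Max F"
      have "sum ?a F = (\<Sum>n\<in>F. real_of_int \<bar>fls_nth (\<sigma> (N k)) n\<bar> * r powi n)"
        using agree[of k "N k"] that False by (intro sum.cong) (auto simp: k_def)
      also have "\<dots> \<le> c" using Zr_le_finite_sum[of "\<sigma> (N k)" r c F] rS that assms(1)
        unfolding S_def by auto
      finally show ?thesis .
    qed
    have summ: "?a summable_on UNIV"
      using fs assms(1) by (intro nonneg_bdd_above_summable_on) (auto simp: bdd_above_def)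
    have "infsum ?a UNIV \<le> c" using summ fs by (intro infsum_le_finite_sums) auto
    then have lS: "l \<in> S" using summ unfolding S_def Zr_le_def by (simp add: lg)
    have "limitin sub.mtopology \<sigma> l sequentially"
      unfolding sub.limit_metric_sequentially
    proof (intro conjI allI impI)
      show "l \<in> S" by (rule lS)
      fix e :: real assume "e > 0"
      then obtain k :: int where k: "\<delta> powi k < e" using small by blast
      have "\<forall>m\<ge>N k. \<sigma> m \<in> S \<and> d (\<sigma> m) l < e"
      proof (intro allI impI conjI)
        fix m assume "N k \<le> m"
        show "\<sigma> m \<in> S" using rS by auto
        have "\<forall>n\<le>k. fls_nth (\<sigma> m) n = fls_nth l n" using agree[OF \<open>N k \<le> m\<close>] lg by simp
        then show "d (\<sigma> m) l < e" using lt k by (meson order_less_trans)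
      qed
      then show "\<exists>N. \<forall>n\<ge>N. \<sigma> n \<in> S \<and> d (\<sigma> n) l < e" by blast
    qed
    then show "\<exists>x. limitin sub.mtopology \<sigma> x sequentially" by blast
  qed
  have "sub.mtotally_bounded S" using tb mtotally_bounded_absolute by blast
  then have "compact_space sub.mtopology"
    using comp sub.compact_space_eq_mcomplete_mtotally_bounded by blast
  then have "compactin mtopology S"
    using compactin_subspace[of mtopology S] mtopology_submetric by simp
  then show ?thesis unfolding tadic_topology_def S_def d_def .
qed

end
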